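(* Let $T_2\in\mathbb{R}^{M^2\times M^2}$ be the symmetric positive definite 2-level Toeplitz matrix $T_2=I\otimes T_1+T_1\otimes I$ described in the context, and let $D_2\in\mathbb{R}^{M^2\times M^2}$ be a diagonal matrix with nonnegative diagonal entries, whose maximal diagonal entry is $\lambda_{\max}$. Let $$\mathcal{R}_2=\begin{bmatrix} I & T_2-D_2\\ D_2-T_2 & I\end{bmatrix},\quad \mathcal{T}_2=\begin{bmatrix} 0 & T_2\\ -T_2 & 0\end{bmatrix},\quad \mathcal{D}_2=\begin{bmatrix} I & -D_2\\ D_2 & I\end{bmatrix},$$ let $\omega>0$, and let $\mathcal{F}_{2,\omega}=\frac{1}{2\omega}(\omega I+\mathcal{T}_2)(\omega I+\mathcal{D}_2)$. Then all eigenvalues of $\mathcal{F}_{2,\omega}^{-1}\mathcal{R}_2$ lie in the disk centered at $1$ with radius $$\sigma(\omega)=\sqrt{\frac{(\omega-1)^2+\lambda_{\max}^2}{(\omega+1)^2+\lambda_{\max}^2}}<1.$$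
   Context: Let $1<\alpha\le2$, $M$ a positive integer, $\mathrm{a}<\mathrm{b}$, $h=(\mathrm{b}-\mathrm{a})/(M+1)$, $\Delta t>0$, $\mu=\Delta t/h^{\alpha}$. For $k\in\mathbb{Z}$ let $c_k=\frac{(-1)^k\Gamma(\alpha+1)}{\Gamma(\alpha/2-k+1)\Gamma(\alpha/2+k+1)}$. Let $T_1=\mu T_0\in\mathbb{R}^{M\times M}$ where $T_0$ is the symmetric Toeplitz matrix with entries $[T_0]_{i,j}=c_{i-j}$. $I$ denotes identity matrices of appropriate size, $\otimes$ the Kronecker product. *)

theory Defs
  imports "HOL-Analysis.Analysis" "Jordan_Normal_Form.Gauss_Jordan_Elimination" "Jordan_Normal_Form.Char_Poly"
begin

text \<open>Fractional centered difference coefficients c_k (Gamma at a pole is 0 in Isabelle,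
  matching the convention 1/Gamma(pole) = 0).\<close>
definition frac_coeff :: "real \<Rightarrow> int \<Rightarrow> real" where
  "frac_coeff \<alpha> k = (-1) powi k * Gamma (\<alpha> + 1) /
     (Gamma (\<alpha>/2 - of_int k + 1) * Gamma (\<alpha>/2 + of_int k + 1))"

definition T0 :: "real \<Rightarrow> nat \<Rightarrow> real mat" where
  "T0 \<alpha> M = mat M M (\<lambda>(i,j). frac_coeff \<alpha> (int i - int j))"

definition T1 :: "real \<Rightarrow> nat \<Rightarrow> real \<Rightarrow> real \<Rightarrow> real \<Rightarrow> real mat" where
  "T1 \<alpha> M a b dt = (dt / (((b - a) / (real M + 1)) powr \<alpha>)) \<cdot>\<^sub>m T0 \<alpha> M"

definition kron :: "'a :: times mat \<Rightarrow> 'a mat \<Rightarrow> 'a mat" where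
  "kron A B = mat (dim_row A * dim_row B) (dim_col A * dim_col B)
     (\<lambda>(i,j). A $$ (i div dim_row B, j div dim_col B) * B $$ (i mod dim_row B, j mod dim_col B))"

definition T2 :: "real \<Rightarrow> nat \<Rightarrow> real \<Rightarrow> real \<Rightarrow> real \<Rightarrow> real mat" where
  "T2 \<alpha> M a b dt = kron (1\<^sub>m M) (T1 \<alpha> M a b dt) + kron (T1 \<alpha> M a b dt) (1\<^sub>m M)"

definition calR :: "real mat \<Rightarrow> real mat \<Rightarrow> real mat" where
  "calR T D = four_block_mat (1\<^sub>m (dim_row T)) (T - D) (D - T) (1\<^sub>m (dim_row T))"

definition calT :: "real mat \<Rightarrow> real mat" where
  "calT T = four_block_mat (0\<^sub>m (dim_row T) (dim_row T)) T (- T) (0\<^sub>m (dim_row T) (dim_row T))"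

definition calD :: "real mat \<Rightarrow> real mat" where
  "calD D = four_block_mat (1\<^sub>m (dim_row D)) (- D) D (1\<^sub>m (dim_row D))"

definition calF :: "real \<Rightarrow> real mat \<Rightarrow> real mat \<Rightarrow> real mat" where
  "calF \<omega> T D = (1 / (2 * \<omega>)) \<cdot>\<^sub>m
     ((\<omega> \<cdot>\<^sub>m 1\<^sub>m (2 * dim_row T) + calT T) * (\<omega> \<cdot>\<^sub>m 1\<^sub>m (2 * dim_row T) + calD D))"

end

theory Submission
  imports Defs
begin


lemma frac_coeff_neg: "frac_coeff al (- k) = frac_coeff al k"
  unfolding frac_coeff_def by (simp add: power_int_minus_one_minus mult.commute)

lemma T0_carrier: "T0 al M \<in> carrier_mat M M" unfolding T0_def by auto

lemma T0_sym: "i < M \<Longrightarrow> j < M \<Longrightarrow> T0 al M $$ (i,j) = T0 al M $$ (j,i)"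
  unfolding T0_def using frac_coeff_neg[of al "int i - int j"] by simp

lemma T1_carrier: "T1 al M a b dt \<in> carrier_mat M M" unfolding T1_def using T0_carrier by auto

lemma T1_sym: "i < M \<Longrightarrow> j < M \<Longrightarrow> T1 al M a b dt $$ (i,j) = T1 al M a b dt $$ (j,i)"
  unfolding T1_def using T0_sym T0_carrier[of al M] by auto

lemma kron_carrier: "A \<in> carrier_mat M M \<Longrightarrow> B \<in> carrier_mat M M \<Longrightarrow> kron A B \<in> carrier_mat (M^2) (M^2)"
  unfolding kron_def by (auto simp: power2_eq_square)

lemma kron_sym: assumes A: "A \<in> carrier_mat M M" and B: "B \<in> carrier_mat M M"
  and sA: "\<And>i j. i < M \<Longrightarrow> j < M \<Longrightarrow> A $$ (i,j) = A $$ (j,i)"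
  and sB: "\<And>i j. i < M \<Longrightarrow> j < M \<Longrightarrow> B $$ (i,j) = B $$ (j,i)"
  and i: "i < M^2" and j: "j < M^2"
  shows "kron A B $$ (i,j) = kron A B $$ (j,i)"
proof -
  have M: "0 < M" using i by (cases M) auto
  have "i div M < M" "j div M < M" using i j by (auto simp: power2_eq_square less_mult_imp_div_less)
  moreover have "i mod M < M" "j mod M < M" using M by auto
  ultimately show ?thesis unfolding kron_def using A B i j sA sB by (auto simp: power2_eq_square)
qed

lemma T2_carrier: "T2 al M a b dt \<in> carrier_mat (M^2) (M^2)"
  unfolding T2_def using kron_carrier T1_carrier one_carrier_mat by (metis add_carrier_mat)

lemma T2_sym: assumes "i < M^2" "j < M^2" shows "T2 al M a b dt $$ (i,j) = T2 al M a b dt $$ (j,i)"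
proof -
  have c1: "kron (1\<^sub>m M) (T1 al M a b dt) \<in> carrier_mat (M^2) (M^2)"
    and c2: "kron (T1 al M a b dt) (1\<^sub>m M) \<in> carrier_mat (M^2) (M^2)"
    using kron_carrier[OF one_carrier_mat T1_carrier] kron_carrier[OF T1_carrier one_carrier_mat] by auto
  have s1: "kron (1\<^sub>m M) (T1 al M a b dt) $$ (i,j) = kron (1\<^sub>m M) (T1 al M a b dt) $$ (j,i)"
    by (rule kron_sym[OF one_carrier_mat T1_carrier _ T1_sym assms]) auto
  have s2: "kron (T1 al M a b dt) (1\<^sub>m M) $$ (i,j) = kron (T1 al M a b dt) (1\<^sub>m M) $$ (j,i)"
    by (rule kron_sym[OF T1_carrier one_carrier_mat T1_sym _ assms]) auto
  show ?thesis unfolding T2_def using c1 c2 s1 s2 assms by simp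
qed


lemma skew_re:
  fixes K :: "real mat" and x :: "complex vec"
  assumes K: "K \<in> carrier_mat n n" and x: "x \<in> carrier_vec n"
    and sk: "\<And>i j. i < n \<Longrightarrow> j < n \<Longrightarrow> K $$ (i,j) = - K $$ (j,i)"
  shows "Re (\<Sum>i<n. cnj (x$i) * (map_mat complex_of_real K *\<^sub>v x) $ i) = 0"
proof -
  define S where "S = (\<Sum>i<n. cnj (x$i) * (map_mat complex_of_real K *\<^sub>v x) $ i)"
  have e: "(map_mat complex_of_real K *\<^sub>v x) $ i = (\<Sum>j<n. of_real (K$$(i,j)) * x$j)" if "i < n" for i
    using K x that by (simp add: scalar_prod_def row_def atLeast0LessThan)
  have S1: "S = (\<Sum>i<n. \<Sum>j<n. cnj (x$i) * of_real (K$$(i,j)) * x$j)"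
    unfolding S_def by (simp add: e sum_distrib_left mult.assoc)
  have "cnj S = (\<Sum>i<n. \<Sum>j<n. x$i * of_real (K$$(i,j)) * cnj (x$j))"
    unfolding S1 by (simp add: cnj_sum)
  also have "\<dots> = (\<Sum>j<n. \<Sum>i<n. x$i * of_real (K$$(i,j)) * cnj (x$j))"
    by (rule sum.swap)
  also have "\<dots> = (\<Sum>j<n. \<Sum>i<n. - (cnj (x$j) * of_real (K$$(j,i)) * x$i))"
    apply (intro sum.cong refl)
    subgoal for j i using sk[of i j] by simp
    done
  also have "\<dots> = - S" unfolding S1 by (simp add: sum_negf)
  finally have "cnj S = - S" .
  hence "Re (cnj S) = Re (- S)" by simp
  hence "Re S = 0" by simp
  thus ?thesis unfolding S_def .
qed


lemma cmod_lin: "(cmod (complex_of_real c * a + b))^2 = c^2 * (cmod a)^2 + (cmod b)^2 + 2 * c * Re (cnj a * b)"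
  unfolding cmod_power2 by (simp add: power2_eq_square) (simp add: algebra_simps)

lemma re_pm: "Re (cnj (u + mu * x) * (u - mu * x)) = (cmod u)^2 - (cmod mu)^2 * (cmod x)^2"
  unfolding cmod_power2 by (simp add: power2_eq_square) (simp add: algebra_simps)


lemma calT_carrier: "T \<in> carrier_mat m m \<Longrightarrow> calT T \<in> carrier_mat (2*m) (2*m)"
  unfolding calT_def by (auto intro!: four_block_carrier_mat[of _ m m _ m, simplified mult_2[symmetric]] simp: mult_2)

lemma calT_skew: assumes T: "T \<in> carrier_mat m m"
  and sym: "\<And>i j. i < m \<Longrightarrow> j < m \<Longrightarrow> T $$ (i,j) = T $$ (j,i)"
  and i: "i < 2*m" and j: "j < 2*m"
  shows "calT T $$ (i,j) = - calT T $$ (j,i)"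
  using T i j sym[of i "j - m"] sym[of "i - m" j] unfolding calT_def by auto

definition sg :: "nat \<Rightarrow> nat \<Rightarrow> nat" where "sg m i = (if i < m then i + m else i - m)"
definition cc :: "real mat \<Rightarrow> nat \<Rightarrow> nat \<Rightarrow> real" where
  "cc D m i = (if i < m then - D $$ (i,i) else D $$ (i - m, i - m))"

lemma calD_carrier: "D \<in> carrier_mat m m \<Longrightarrow> calD D - 1\<^sub>m (2*m) \<in> carrier_mat (2*m) (2*m)"
  unfolding calD_def by (auto simp: mult_2)

lemma calD_entry: assumes D: "D \<in> carrier_mat m m" and dg: "diagonal_mat D"
  and i: "i < 2*m" and j: "j < 2*m"
  shows "(calD D - 1\<^sub>m (2*m)) $$ (i,j) = (if j = sg m i then cc D m i else 0)"
  using D dg i j unfolding calD_def sg_def cc_def diagonal_mat_def by auto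

lemma calD_skew: assumes D: "D \<in> carrier_mat m m" and dg: "diagonal_mat D"
  and i: "i < 2*m" and j: "j < 2*m"
  shows "(calD D - 1\<^sub>m (2*m)) $$ (i,j) = - (calD D - 1\<^sub>m (2*m)) $$ (j,i)"
proof -
  have e: "j = sg m i \<longleftrightarrow> i = sg m j" using i j unfolding sg_def by auto
  have c: "j = sg m i \<Longrightarrow> cc D m i = - cc D m j" using i j unfolding sg_def cc_def by auto
  show ?thesis unfolding calD_entry[OF D dg i j] calD_entry[OF D dg j i] using e c by auto
qed

lemma Sc_apply: assumes D: "D \<in> carrier_mat m m" and dg: "diagonal_mat D"
  and v: "v \<in> carrier_vec (2*m)" and i: "i < 2*m"
  shows "(map_mat complex_of_real (calD D - 1\<^sub>m (2*m)) *\<^sub>v v) $ i = of_real (cc D m i) * v $ sg m i"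
proof -
  have "sg m i < 2*m" using i unfolding sg_def by auto
  have "(map_mat complex_of_real (calD D - 1\<^sub>m (2*m)) *\<^sub>v v) $ i
     = (\<Sum>j\<in>{0..<2*m}. of_real ((calD D - 1\<^sub>m (2*m)) $$ (i,j)) * v $ j)"
    using calD_carrier[OF D] v i by (simp add: scalar_prod_def row_def)
  also have "\<dots> = (\<Sum>j\<in>{0..<2*m}. if j = sg m i then of_real (cc D m i) * v $ j else 0)"
    by (intro sum.cong refl) (simp add: calD_entry[OF D dg i])
  also have "\<dots> = of_real (cc D m i) * v $ sg m i" using \<open>sg m i < 2*m\<close> by (simp add: sum.delta')
  finally show ?thesis .
qed

lemma sg_bij: "i < 2*m \<Longrightarrow> sg m (sg m i) = i" "i < 2*m \<Longrightarrow> sg m i < 2*m"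
  unfolding sg_def by auto

lemma Sc_bound: assumes D: "D \<in> carrier_mat m m" and dg: "diagonal_mat D"
  and v: "v \<in> carrier_vec (2*m)" and lam: "\<And>i. i < m \<Longrightarrow> \<bar>D $$ (i,i)\<bar> \<le> lam"
  shows "(\<Sum>i<2*m. (cmod ((map_mat complex_of_real (calD D - 1\<^sub>m (2*m)) *\<^sub>v v) $ i))^2)
     \<le> lam^2 * (\<Sum>i<2*m. (cmod (v $ i))^2)"
proof -
  have cb: "\<bar>cc D m i\<bar> \<le> lam" if "i < 2*m" for i
    using lam[of i] lam[of "i - m"] that unfolding cc_def by auto
  have "(\<Sum>i<2*m. (cmod ((map_mat complex_of_real (calD D - 1\<^sub>m (2*m)) *\<^sub>v v) $ i))^2)
      = (\<Sum>i<2*m. (\<bar>cc D m i\<bar> * cmod (v $ sg m i))^2)"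
    apply (intro sum.cong refl)
    subgoal for i by (subst Sc_apply[OF D dg v]) (auto simp: norm_mult)
    done
  also have "\<dots> \<le> (\<Sum>i<2*m. (lam * cmod (v $ sg m i))^2)"
    by (intro sum_mono power_mono mult_right_mono) (auto simp: cb)
  also have "\<dots> = lam^2 * (\<Sum>i<2*m. (cmod (v $ sg m i))^2)"
    by (simp add: sum_distrib_left power_mult_distrib)
  also have "(\<Sum>i<2*m. (cmod (v $ sg m i))^2) = (\<Sum>i<2*m. (cmod (v $ i))^2)"
    by (rule sum.reindex_bij_witness[where i="sg m" and j="sg m"]) (auto simp: sg_bij)
  finally show ?thesis .
qed

lemma norm_id2:
  fixes K :: "real mat" and x :: "complex vec"
  assumes K: "K \<in> carrier_mat n n" and x: "x \<in> carrier_vec n"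
    and sk: "\<And>i j. i < n \<Longrightarrow> j < n \<Longrightarrow> K $$ (i,j) = - K $$ (j,i)"
  shows "(\<Sum>i<n. (cmod (of_real c * x$i + of_real s * (map_mat complex_of_real K *\<^sub>v x) $ i))^2)
       = c^2 * (\<Sum>i<n. (cmod (x$i))^2) + s^2 * (\<Sum>i<n. (cmod ((map_mat complex_of_real K *\<^sub>v x) $ i))^2)"
proof -
  let ?y = "map_mat complex_of_real K *\<^sub>v x"
  have "(\<Sum>i<n. (cmod (of_real c * x$i + of_real s * ?y $ i))^2)
     = (\<Sum>i<n. c^2 * (cmod (x$i))^2 + s^2 * (cmod (?y $ i))^2 + 2 * c * s * Re (cnj (x$i) * ?y $ i))"
    by (intro sum.cong refl) (simp add: cmod_lin norm_mult power_mult_distrib mult.assoc mult.left_commute)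
  also have "\<dots> = c^2 * (\<Sum>i<n. (cmod (x$i))^2) + s^2 * (\<Sum>i<n. (cmod (?y $ i))^2)
      + 2 * c * s * Re (\<Sum>i<n. cnj (x$i) * ?y $ i)"
    by (simp only: sum.distrib sum_distrib_left Re_sum)
  also have "Re (\<Sum>i<n. cnj (x$i) * ?y $ i) = 0" by (rule skew_re[OF K x sk])
  finally show ?thesis by simp
qed

lemma smult_mat_vec: "A \<in> carrier_mat nr nc \<Longrightarrow> v \<in> carrier_vec nc \<Longrightarrow> (k \<cdot>\<^sub>m A) *\<^sub>v v = k \<cdot>\<^sub>v (A *\<^sub>v v)"
  by (intro eq_vecI) (auto simp: scalar_prod_def sum_distrib_left mult.assoc)

lemma map_smult: "map_mat complex_of_real (k \<cdot>\<^sub>m A) = complex_of_real k \<cdot>\<^sub>m map_mat complex_of_real A"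
  by (intro eq_matI) auto

lemma nsq_zero: fixes v :: "complex vec" assumes v: "v \<in> carrier_vec n" and z: "(\<Sum>i<n. (cmod (v$i))^2) = 0"
  shows "v = 0\<^sub>v n"
proof (rule eq_vecI)
  fix i assume "i < dim_vec (0\<^sub>v n :: complex vec)"
  hence i: "i < n" by simp
  have "(cmod (v$i))^2 = 0" using z i by (subst (asm) sum_nonneg_eq_0_iff) auto
  thus "v $ i = 0\<^sub>v n $ i" using i by simp
qed (use v in auto)

theorem theorem2:
  fixes \<alpha> a b dt \<omega> :: real and M :: nat and D2 :: "real mat"
  assumes "1 < \<alpha>" and "\<alpha> \<le> 2" and "0 < M" and "a < b" and "0 < dt"
    and "D2 \<in> carrier_mat (M^2) (M^2)" and "diagonal_mat D2"
    and "\<forall>i < M^2. 0 \<le> D2 $$ (i,i)"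
    and "0 < \<omega>"
  shows "let T = T2 \<alpha> M a b dt;
             lmax = Max {D2 $$ (i,i) | i. i < M^2};
             \<sigma> = sqrt (((\<omega> - 1)^2 + lmax^2) / ((\<omega> + 1)^2 + lmax^2))
         in (\<forall>z. eigenvalue (map_mat complex_of_real
                    (the (mat_inverse (calF \<omega> T D2)) * calR T D2)) z
                \<longrightarrow> cmod (z - 1) \<le> \<sigma>)
            \<and> \<sigma> < 1"
proof -
  note D2c = assms(6) and dg = assms(7) and Dnn = assms(8) and om = assms(9)
  define m where "m = M^2"
  define n where "n = 2*m"
  define T where "T = T2 \<alpha> M a b dt"
  define lam where "lam = Max {D2 $$ (i,i) | i. i < M^2}"
  define sig where "sig = sqrt (((\<omega> - 1)^2 + lam^2) / ((\<omega> + 1)^2 + lam^2))"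
  have Tc: "T \<in> carrier_mat m m" unfolding T_def m_def by (rule T2_carrier)
  have Tsym: "\<And>i j. i < m \<Longrightarrow> j < m \<Longrightarrow> T $$ (i,j) = T $$ (j,i)"
    unfolding T_def m_def by (rule T2_sym)
  have D: "D2 \<in> carrier_mat m m" using D2c m_def by simp
  define Tr where "Tr = calT T"
  define Sr where "Sr = calD D2 - 1\<^sub>m n"
  have Trc: "Tr \<in> carrier_mat n n" unfolding Tr_def n_def by (rule calT_carrier[OF Tc])
  have Src: "Sr \<in> carrier_mat n n" unfolding Sr_def n_def by (rule calD_carrier[OF D])
  have Trs: "\<And>i j. i < n \<Longrightarrow> j < n \<Longrightarrow> Tr $$ (i,j) = - Tr $$ (j,i)"
    unfolding Tr_def n_def by (rule calT_skew[OF Tc Tsym])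
  have Srs: "\<And>i j. i < n \<Longrightarrow> j < n \<Longrightarrow> Sr $$ (i,j) = - Sr $$ (j,i)"
    unfolding Sr_def n_def by (rule calD_skew[OF D dg])
  define Tc where "Tc = map_mat complex_of_real Tr"
  define Sc where "Sc = map_mat complex_of_real Sr"
  have Tcc: "Tc \<in> carrier_mat n n" and Scc: "Sc \<in> carrier_mat n n" using Trc Src Tc_def Sc_def by auto
  have fin: "finite {D2 $$ (i,i) | i. i < M^2}" by simp
  have ne: "{D2 $$ (i,i) | i. i < M^2} \<noteq> {}" using assms(3) by (auto intro!: exI[of _ 0])
  have dle: "\<And>i. i < m \<Longrightarrow> \<bar>D2 $$ (i,i)\<bar> \<le> lam"
  proof -
    fix i assume i: "i < m"
    have "D2 $$ (i,i) \<le> lam" unfolding lam_def using i m_def by (intro Max_ge[OF fin]) auto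
    thus "\<bar>D2 $$ (i,i)\<bar> \<le> lam" using Dnn i m_def by auto
  qed
  have lam0: "0 \<le> lam" using dle[of 0] assms(3) m_def by auto
  have calTc: "calT T \<in> carrier_mat n n" using Trc Tr_def by simp
  have calDc: "calD D2 \<in> carrier_mat n n" using D unfolding calD_def n_def by (auto simp: mult_2)
  have dimT: "dim_row T = m" using Tc by simp
  have Fc: "calF \<omega> T D2 \<in> carrier_mat n n"
    unfolding calF_def dimT n_def[symmetric] using calTc calDc by auto
  have Rc: "calR T D2 \<in> carrier_mat n n"
    unfolding calR_def dimT using Tc D by (auto simp: n_def mult_2)
  have mA: "map_mat complex_of_real (\<omega> \<cdot>\<^sub>m 1\<^sub>m n + calT T) = of_real \<omega> \<cdot>\<^sub>m 1\<^sub>m n + Tc"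
    unfolding Tc_def Tr_def using calTc by (intro eq_matI) auto
  have mB: "map_mat complex_of_real (\<omega> \<cdot>\<^sub>m 1\<^sub>m n + calD D2) = of_real (\<omega>+1) \<cdot>\<^sub>m 1\<^sub>m n + Sc"
    unfolding Sc_def Sr_def using calDc by (intro eq_matI) auto
  have mF: "map_mat complex_of_real (calF \<omega> T D2)
     = of_real (1/(2*\<omega>)) \<cdot>\<^sub>m ((of_real \<omega> \<cdot>\<^sub>m 1\<^sub>m n + Tc) * (of_real (\<omega>+1) \<cdot>\<^sub>m 1\<^sub>m n + Sc))"
    unfolding calF_def dimT n_def[symmetric] map_smult mA[symmetric] mB[symmetric]
    using calTc calDc by (subst of_real_hom.mat_hom_mult) auto
  have Fv: "map_mat complex_of_real (calF \<omega> T D2) *\<^sub>v v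
     = of_real (1/(2*\<omega>)) \<cdot>\<^sub>v (of_real \<omega> \<cdot>\<^sub>v (of_real (\<omega>+1) \<cdot>\<^sub>v v + Sc *\<^sub>v v)
         + Tc *\<^sub>v (of_real (\<omega>+1) \<cdot>\<^sub>v v + Sc *\<^sub>v v))" if v: "v \<in> carrier_vec n" for v
  proof -
    have lin: "(k \<cdot>\<^sub>m 1\<^sub>m n + K) *\<^sub>v w = k \<cdot>\<^sub>v w + K *\<^sub>v w"
      if K: "K \<in> carrier_mat n n" and w: "w \<in> carrier_vec n" for k and K :: "complex mat" and w
      using add_mult_distrib_mat_vec[OF smult_carrier_mat[OF one_carrier_mat] K w]
        smult_mat_vec[OF one_carrier_mat w] w by simp
    have Xc: "(of_real \<omega> \<cdot>\<^sub>m 1\<^sub>m n + Tc) \<in> carrier_mat n n" using Tcc by simp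
    have Yc: "(of_real (\<omega>+1) \<cdot>\<^sub>m 1\<^sub>m n + Sc) \<in> carrier_mat n n" using Scc by simp
    have Yv: "(of_real (\<omega>+1) \<cdot>\<^sub>m 1\<^sub>m n + Sc) *\<^sub>v v \<in> carrier_vec n" using Yc v by simp
    show ?thesis unfolding mF
      apply (subst smult_mat_vec[OF mult_carrier_mat[OF Xc Yc] v])
      apply (subst assoc_mult_mat_vec[OF Xc Yc v])
      apply (subst lin[OF Scc v])
      apply (subst lin[OF Tcc])
      using Scc v apply simp
      apply (rule refl)
      done
  qed
  have Rv: "map_mat complex_of_real (calR T D2) *\<^sub>v v = v + Tc *\<^sub>v v + Sc *\<^sub>v v"
    if v: "v \<in> carrier_vec n" for v
  proof -
    have "map_mat complex_of_real (calR T D2) = 1\<^sub>m n + Tc + Sc"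
      unfolding Tc_def Sc_def Tr_def Sr_def calR_def calT_def calD_def dimT using Tc D
      by (intro eq_matI) (auto simp: n_def mult_2)
    thus ?thesis using v Tcc Scc by (simp add: add_mult_distrib_mat_vec[of _ n n])
  qed
  have den: "0 < (\<omega> + 1)^2 + lam^2" using om by (simp add: add_pos_nonneg)
  have sig1: "sig < 1"
  proof -
    have "(\<omega> - 1)^2 + lam^2 < (\<omega> + 1)^2 + lam^2" using om by (simp add: power2_eq_square algebra_simps)
    hence "((\<omega> - 1)^2 + lam^2) / ((\<omega> + 1)^2 + lam^2) < 1" using den by simp
    thus ?thesis unfolding sig_def by simp
  qed
  have NX: "(\<Sum>i<n. (cmod ((of_real (\<omega>+1) \<cdot>\<^sub>v v + Sc *\<^sub>v v) $ i))^2)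
     = (\<omega>+1)^2 * (\<Sum>i<n. (cmod (v$i))^2) + (\<Sum>i<n. (cmod ((Sc *\<^sub>v v) $ i))^2)"
    if v: "v \<in> carrier_vec n" for v
  proof -
    have "(\<Sum>i<n. (cmod ((of_real (\<omega>+1) \<cdot>\<^sub>v v + Sc *\<^sub>v v) $ i))^2)
      = (\<Sum>i<n. (cmod (of_real (\<omega>+1) * v$i + of_real 1 * (map_mat complex_of_real Sr *\<^sub>v v) $ i))^2)"
      using v Scc by (intro sum.cong refl) (simp add: Sc_def)
    also have "\<dots> = (\<omega>+1)^2 * (\<Sum>i<n. (cmod (v$i))^2) + 1^2 * (\<Sum>i<n. (cmod ((Sc *\<^sub>v v) $ i))^2)"
      unfolding Sc_def by (rule norm_id2[OF Src v Srs])
    finally show ?thesis by simp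
  qed
  have NU: "(\<Sum>i<n. (cmod (of_real (\<omega>-1) * v$i - (Sc *\<^sub>v v) $ i))^2)
     = (\<omega>-1)^2 * (\<Sum>i<n. (cmod (v$i))^2) + (\<Sum>i<n. (cmod ((Sc *\<^sub>v v) $ i))^2)"
    if v: "v \<in> carrier_vec n" for v
  proof -
    have "(\<Sum>i<n. (cmod (of_real (\<omega>-1) * v$i - (Sc *\<^sub>v v) $ i))^2)
      = (\<Sum>i<n. (cmod (of_real (\<omega>-1) * v$i + of_real (-1) * (map_mat complex_of_real Sr *\<^sub>v v) $ i))^2)"
      by (intro sum.cong refl) (simp add: Sc_def)
    also have "\<dots> = (\<omega>-1)^2 * (\<Sum>i<n. (cmod (v$i))^2) + (-1)^2 * (\<Sum>i<n. (cmod ((Sc *\<^sub>v v) $ i))^2)"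
      unfolding Sc_def by (rule norm_id2[OF Src v Srs])
    finally show ?thesis by simp
  qed
  have Qnn: "0 \<le> (\<Sum>i<n. (cmod ((Sc *\<^sub>v v) $ i))^2)" for v by (rule sum_nonneg) simp
  have Nnn: "0 \<le> (\<Sum>i<n. (cmod (v $ i))^2)" for v :: "complex vec" by (rule sum_nonneg) simp
  have inj: "v = 0\<^sub>v n" if v: "v \<in> carrier_vec n" and F0: "map_mat complex_of_real (calF \<omega> T D2) *\<^sub>v v = 0\<^sub>v n" for v
  proof -
    define x where "x = of_real (\<omega>+1) \<cdot>\<^sub>v v + Sc *\<^sub>v v"
    have xc: "x \<in> carrier_vec n" unfolding x_def using v Scc by simp
    define y where "y = of_real \<omega> \<cdot>\<^sub>v x + Tc *\<^sub>v x"
    have yc: "y \<in> carrier_vec n" unfolding y_def using xc Tcc by simp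
    have "of_real (1/(2*\<omega>)) \<cdot>\<^sub>v y = 0\<^sub>v n" using F0 Fv[OF v] unfolding y_def x_def by simp
    hence y0: "y $ i = 0" if "i < n" for i
    proof -
      assume "of_real (1/(2*\<omega>)) \<cdot>\<^sub>v y = 0\<^sub>v n"
      hence "(of_real (1/(2*\<omega>)) \<cdot>\<^sub>v y) $ i = 0" using that by simp
      thus ?thesis using that yc om by simp
    qed
    have "0 = (\<Sum>i<n. (cmod (y $ i))^2)" using y0 by simp
    also have "\<dots> = (\<Sum>i<n. (cmod (of_real \<omega> * x$i + of_real 1 * (map_mat complex_of_real Tr *\<^sub>v x) $ i))^2)"
      unfolding y_def using xc Tcc by (intro sum.cong refl) (simp add: Tc_def)
    also have "\<dots> = \<omega>^2 * (\<Sum>i<n. (cmod (x$i))^2) + 1^2 * (\<Sum>i<n. (cmod ((map_mat complex_of_real Tr *\<^sub>v x) $ i))^2)"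
      by (rule norm_id2[OF Trc xc Trs])
    finally have "\<omega>^2 * (\<Sum>i<n. (cmod (x$i))^2) \<le> 0"
      using Nnn[of "map_mat complex_of_real Tr *\<^sub>v x"] by simp
    hence "(\<Sum>i<n. (cmod (x$i))^2) \<le> 0" using om by (simp add: mult_le_0_iff)
    hence "(\<omega>+1)^2 * (\<Sum>i<n. (cmod (v$i))^2) \<le> 0" using NX[OF v] Qnn[of v] unfolding x_def by simp
    hence "(\<Sum>i<n. (cmod (v$i))^2) \<le> 0" using om by (simp add: mult_le_0_iff)
    hence "(\<Sum>i<n. (cmod (v$i))^2) = 0" using Nnn[of v] by simp
    thus ?thesis by (rule nsq_zero[OF v])
  qed
  have mFc: "map_mat complex_of_real (calF \<omega> T D2) \<in> carrier_mat n n" using Fc by simp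
  have detF: "det (calF \<omega> T D2) \<noteq> 0"
  proof
    assume "det (calF \<omega> T D2) = 0"
    hence "det (map_mat complex_of_real (calF \<omega> T D2)) = 0" by simp
    then obtain v where "v \<in> carrier_vec n" "v \<noteq> 0\<^sub>v n" "map_mat complex_of_real (calF \<omega> T D2) *\<^sub>v v = 0\<^sub>v n"
      using det_0_iff_vec_prod_zero[OF mFc] by blast
    thus False using inj by blast
  qed
  obtain Fi where Fi: "mat_inverse (calF \<omega> T D2) = Some Fi"
  proof (cases "mat_inverse (calF \<omega> T D2)")
    case None
    have "calF \<omega> T D2 \<notin> Units (ring_mat TYPE(real) n ())" by (rule mat_inverse(1)[OF Fc None])
    moreover have "calF \<omega> T D2 \<in> Units (ring_mat TYPE(real) n ())" by (rule det_non_zero_imp_unit[OF Fc detF])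
    ultimately show ?thesis by blast
  qed
  from mat_inverse(2)[OF Fc Fi] have FFi: "calF \<omega> T D2 * Fi = 1\<^sub>m n" and Fic: "Fi \<in> carrier_mat n n" by auto
  have main: "cmod (z - 1) \<le> sig"
    if ev: "eigenvalue (map_mat complex_of_real (the (mat_inverse (calF \<omega> T D2)) * calR T D2)) z" for z
  proof -
    let ?F = "map_mat complex_of_real (calF \<omega> T D2)"
    let ?P = "map_mat complex_of_real (Fi * calR T D2)"
    obtain v where v: "v \<in> carrier_vec n" and v0: "v \<noteq> 0\<^sub>v n" and Pv: "?P *\<^sub>v v = z \<cdot>\<^sub>v v"
      using ev Fi Fic unfolding eigenvalue_def eigenvector_def by auto
    have "?F *\<^sub>v (?P *\<^sub>v v) = z \<cdot>\<^sub>v (?F *\<^sub>v v)" unfolding Pv using mFc v by (simp add: mult_mat_vec)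
    moreover have "?F *\<^sub>v (?P *\<^sub>v v) = map_mat complex_of_real (calR T D2) *\<^sub>v v"
    proof -
      have Pc: "?P \<in> carrier_mat n n" using Fic Rc by simp
      have "?F *\<^sub>v (?P *\<^sub>v v) = (?F * ?P) *\<^sub>v v" by (rule assoc_mult_mat_vec[OF mFc Pc v, symmetric])
      also have "?F * ?P = map_mat complex_of_real (calF \<omega> T D2 * (Fi * calR T D2))"
        by (rule of_real_hom.mat_hom_mult[OF Fc mult_carrier_mat[OF Fic Rc], symmetric])
      also have "calF \<omega> T D2 * (Fi * calR T D2) = calR T D2"
        using Fc Fic Rc FFi by (simp add: assoc_mult_mat[symmetric])
      finally show ?thesis .
    qed
    ultimately have key: "map_mat complex_of_real (calR T D2) *\<^sub>v v = z \<cdot>\<^sub>v (?F *\<^sub>v v)" by simp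
    define q where "q = Sc *\<^sub>v v"
    define r where "r = Tc *\<^sub>v v"
    define s where "s = Tc *\<^sub>v q"
    have qc: "q \<in> carrier_vec n" and rc: "r \<in> carrier_vec n" and sc: "s \<in> carrier_vec n"
      unfolding q_def r_def s_def using v Scc Tcc by auto
    have Tx: "Tc *\<^sub>v (of_real (\<omega>+1) \<cdot>\<^sub>v v + q) = of_real (\<omega>+1) \<cdot>\<^sub>v r + s"
      unfolding r_def s_def using Tcc v qc by (simp add: mult_add_distrib_mat_vec[of _ n n] mult_mat_vec)
    have hyp: "v$i + r$i + q$i = z * (of_real (1/(2*\<omega>)) * (of_real \<omega> * (of_real (\<omega>+1) * v$i + q$i)
        + (of_real (\<omega>+1) * r$i + s$i)))" if i: "i < n" for i
    proof -
      have "(map_mat complex_of_real (calR T D2) *\<^sub>v v) $ i = (z \<cdot>\<^sub>v (?F *\<^sub>v v)) $ i" using key by simp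
      thus ?thesis unfolding Rv[OF v] Fv[OF v] q_def[symmetric] Tx
        using i v qc rc sc Tcc unfolding r_def by (simp add: add.assoc)
    qed
    define mu where "mu = 1 - z"
    define be where "be = of_real (\<omega>-1) + mu * of_real (\<omega>+1)"
    define ga where "ga = mu - 1"
    define bv where "bv = be \<cdot>\<^sub>v v + ga \<cdot>\<^sub>v q"
    have bvc: "bv \<in> carrier_vec n" unfolding bv_def using v qc by simp
    have Tbv: "Tc *\<^sub>v bv = be \<cdot>\<^sub>v r + ga \<cdot>\<^sub>v s"
      unfolding bv_def r_def s_def using Tcc v qc by (simp add: mult_add_distrib_mat_vec[of _ n n] mult_mat_vec)
    define u where "u = (\<lambda>i. of_real (\<omega>-1) * v$i - q$i)"
    define x where "x = (\<lambda>i. of_real (\<omega>+1) * v$i + q$i)"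
    have comp: "of_real \<omega> * (u i - mu * x i) = (Tc *\<^sub>v bv) $ i" if i: "i < n" for i
    proof -
      have h: "2 * of_real \<omega> * (v$i + r$i + q$i) = z * (of_real \<omega> * (of_real (\<omega>+1) * v$i + q$i)
        + (of_real (\<omega>+1) * r$i + s$i))" using hyp[OF i] om by (simp add: field_simps)
      have "(Tc *\<^sub>v bv) $ i = be * r$i + ga * s$i" unfolding Tbv using i rc sc by simp
      moreover have "of_real \<omega> * (u i - mu * x i) - (be * r$i + ga * s$i)
        = z * (of_real \<omega> * (of_real (\<omega>+1) * v$i + q$i) + (of_real (\<omega>+1) * r$i + s$i))
          - 2 * of_real \<omega> * (v$i + r$i + q$i)"
        unfolding u_def x_def be_def ga_def mu_def by (simp add: algebra_simps)
      ultimately show ?thesis using h by simp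
    qed
    have bvi: "bv $ i = u i + mu * x i" if i: "i < n" for i
      unfolding bv_def u_def x_def be_def ga_def using i v qc by (simp add: algebra_simps)
    have "(\<Sum>i<n. Re (cnj (u i + mu * x i) * (u i - mu * x i)))
       = Re (\<Sum>i<n. cnj (bv $ i) * (u i - mu * x i))" by (simp add: Re_sum bvi)
    also have "(\<Sum>i<n. cnj (bv $ i) * (u i - mu * x i)) = (\<Sum>i<n. cnj (bv $ i) * (Tc *\<^sub>v bv) $ i) / of_real \<omega>"
      unfolding sum_divide_distrib using om by (intro sum.cong refl) (simp add: comp[symmetric] field_simps)
    also have "Re \<dots> = Re (\<Sum>i<n. cnj (bv $ i) * (Tc *\<^sub>v bv) $ i) / \<omega>" by (simp add: Re_divide_of_real)
    also have "Re (\<Sum>i<n. cnj (bv $ i) * (Tc *\<^sub>v bv) $ i) = 0" unfolding Tc_def by (rule skew_re[OF Trc bvc Trs])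
    finally have h0: "(\<Sum>i<n. Re (cnj (u i + mu * x i) * (u i - mu * x i))) = 0 / \<omega>" .
    have "(\<Sum>i<n. Re (cnj (u i + mu * x i) * (u i - mu * x i)))
       = (\<Sum>i<n. (cmod (u i))^2 - (cmod mu)^2 * (cmod (x i))^2)" by (simp only: re_pm)
    with h0 have "(\<Sum>i<n. (cmod (u i))^2 - (cmod mu)^2 * (cmod (x i))^2) = 0" by simp
    hence UX: "(\<Sum>i<n. (cmod (u i))^2) = (cmod mu)^2 * (\<Sum>i<n. (cmod (x i))^2)"
      by (simp add: sum_subtractf sum_distrib_left)
    define N where "N = (\<Sum>i<n. (cmod (v$i))^2)"
    define Q where "Q = (\<Sum>i<n. (cmod (q$i))^2)"
    have U: "(\<Sum>i<n. (cmod (u i))^2) = (\<omega>-1)^2 * N + Q" unfolding u_def N_def Q_def q_def by (rule NU[OF v])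
    have X: "(\<Sum>i<n. (cmod (x i))^2) = (\<omega>+1)^2 * N + Q"
    proof -
      have "(\<Sum>i<n. (cmod (x i))^2) = (\<Sum>i<n. (cmod ((of_real (\<omega>+1) \<cdot>\<^sub>v v + Sc *\<^sub>v v) $ i))^2)"
        unfolding x_def q_def using v Scc by (intro sum.cong refl) simp
      thus ?thesis using NX[OF v] unfolding N_def Q_def q_def by simp
    qed
    have N0: "0 < N"
    proof -
      have "N \<noteq> 0" using nsq_zero[OF v] v0 unfolding N_def by blast
      thus ?thesis using Nnn[of v] unfolding N_def by simp
    qed
    have Q0: "0 \<le> Q" unfolding Q_def by (rule sum_nonneg) simp
    have QL: "Q \<le> lam^2 * N" unfolding Q_def N_def q_def Sc_def Sr_def n_def
      using Sc_bound[OF D dg _ dle] v n_def by simp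
    define A where "A = (\<omega>-1)^2"
    define B where "B = (\<omega>+1)^2"
    have AB: "A < B" unfolding A_def B_def using om by (simp add: power2_eq_square algebra_simps)
    have A0: "0 \<le> A" unfolding A_def by simp
    have eq: "(cmod mu)^2 * (B * N + Q) = A * N + Q" using UX U X unfolding A_def B_def by simp
    have pos: "0 < B * N + Q" using AB A0 N0 Q0 by (simp add: add_pos_nonneg)
    have "(B - A) * (Q - lam^2 * N) \<le> 0" using AB QL by (intro mult_nonneg_nonpos) auto
    hence "(A * N + Q) * (B + lam^2) \<le> (A + lam^2) * (B * N + Q)" by (simp add: algebra_simps)
    hence "(A * N + Q) / (B * N + Q) \<le> (A + lam^2) / (B + lam^2)"
      using pos den unfolding B_def by (simp add: divide_simps)
    moreover have "(cmod mu)^2 = (A * N + Q) / (B * N + Q)" using eq pos by (simp add: field_simps)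
    ultimately have "(cmod mu)^2 \<le> (A + lam^2) / (B + lam^2)" by simp
    hence "sqrt ((cmod mu)^2) \<le> sig" unfolding sig_def A_def B_def by (rule real_sqrt_le_mono)
    moreover have "cmod (z - 1) = cmod mu" unfolding mu_def by (simp add: norm_minus_commute)
    ultimately show ?thesis by simp
  qed
  show ?thesis unfolding Let_def T_def[symmetric] lam_def[symmetric] sig_def[symmetric]
    using main sig1 by blast
qed
end
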